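(* Let $T$ be an $n$-universal tree. Then for every binary rooted tree $T'$ with $n$ leaves and no degree-1 nodes, there is an injective map $f$ from the nodes of $T'$ to the nodes of $T$ with the following two properties: - $f(\mathsf{NCA}(u,v))=\mathsf{NCA}(f(u),f(v))$ for all $u,v$; - the depth of $f(v)$ in $T$ has the same parity as the depth of $v$ in $T'$, for every node $v$. That is, $T$ is a parity-preserving minor-universal tree for this class.
   Context: Trees are rooted; depth is the distance from the root (the root has depth 0); degree is the number of children; binary means every node has at most two children. $\mathsf{NCA}$ denotes the nearest common ancestor. Cutting: select nodes $a,b$ with $a$ a child of $b$, and remove the entire subtree rooted at $a$ together with the edge between $a$ and $b$. Contraction: select an internal node $b$ with parent $a$ and exactly one child $c$, and remove $b$. If $c$ is internal, the children of $c$ are made children of $a$ and $c$ is removed. If $c$ is a leaf, it becomes a child of $a$. $T$ implements $T'$ if $T'$ can be obtained (up to isomorphism) from $T$ by a sequence of cuttings and contractions. $T$ is $n$-universal if it implements every rooted tree with at most $n$ leaves and no degree-1 nodes. *)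

theory Defs
  imports Main
begin

text \<open>Finite rooted trees as rose trees; the order of children is irrelevant
  (trees are compared up to isomorphism). Nodes are addressed by paths from the root
  (lists of child indices); the root is the empty path.\<close>

datatype tree = Node "tree list"

fun children :: "tree \<Rightarrow> tree list" where
  "children (Node ts) = ts"

fun subtree_at :: "tree \<Rightarrow> nat list \<Rightarrow> tree option" where
  "subtree_at t [] = Some t"
| "subtree_at (Node ts) (i # p) = (if i < length ts then subtree_at (ts ! i) p else None)"

definition nodes :: "tree \<Rightarrow> nat list set" where
  "nodes t = {p. subtree_at t p \<noteq> None}"

definition degree :: "tree \<Rightarrow> nat list \<Rightarrow> nat" where
  "degree t p = (case subtree_at t p of None \<Rightarrow> 0 | Some s \<Rightarrow> length (children s))"

definition leaves :: "tree \<Rightarrow> nat list set" where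
  "leaves t = {p \<in> nodes t. degree t p = 0}"

definition num_leaves :: "tree \<Rightarrow> nat" where
  "num_leaves t = card (leaves t)"

definition no_deg1 :: "tree \<Rightarrow> bool" where
  "no_deg1 t \<longleftrightarrow> (\<forall>p \<in> nodes t. degree t p \<noteq> 1)"

definition binary :: "tree \<Rightarrow> bool" where
  "binary t \<longleftrightarrow> (\<forall>p \<in> nodes t. degree t p \<le> 2)"

fun nca :: "nat list \<Rightarrow> nat list \<Rightarrow> nat list" where
  "nca (x # xs) (y # ys) = (if x = y then x # nca xs ys else [])"
| "nca _ _ = []"

definition depth :: "nat list \<Rightarrow> nat" where
  "depth p = length p"

inductive iso :: "tree \<Rightarrow> tree \<Rightarrow> bool" where
  "length ts = length us \<Longrightarrow> bij_betw \<sigma> {..<length ts} {..<length us} \<Longrightarrow>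
   (\<forall>i<length ts. iso (ts ! i) (us ! \<sigma> i)) \<Longrightarrow> iso (Node ts) (Node us)"

inductive cut_step :: "tree \<Rightarrow> tree \<Rightarrow> bool" where
  cut_here: "i < length ts \<Longrightarrow> cut_step (Node ts) (Node (take i ts @ drop (Suc i) ts))"
| cut_deeper: "i < length ts \<Longrightarrow> cut_step (ts ! i) t' \<Longrightarrow> cut_step (Node ts) (Node (ts[i := t']))"

inductive contract_step :: "tree \<Rightarrow> tree \<Rightarrow> bool" where
  contr_leaf: "i < length ts \<Longrightarrow> ts ! i = Node [Node []] \<Longrightarrow>
     contract_step (Node ts) (Node (ts[i := Node []]))"
| contr_internal: "i < length ts \<Longrightarrow> ts ! i = Node [Node cs] \<Longrightarrow> cs \<noteq> [] \<Longrightarrow>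
     contract_step (Node ts) (Node (take i ts @ drop (Suc i) ts @ cs))"
| contr_deeper: "i < length ts \<Longrightarrow> contract_step (ts ! i) t' \<Longrightarrow>
     contract_step (Node ts) (Node (ts[i := t']))"

definition implements :: "tree \<Rightarrow> tree \<Rightarrow> bool" where
  "implements T T' \<longleftrightarrow>
     (\<exists>S. (\<lambda>x y. cut_step x y \<or> contract_step x y)\<^sup>*\<^sup>* T S \<and> iso S T')"

definition universal :: "nat \<Rightarrow> tree \<Rightarrow> bool" where
  "universal n T \<longleftrightarrow>
     (\<forall>T'. num_leaves T' \<le> n \<longrightarrow> no_deg1 T' \<longrightarrow> implements T T')"

end

theory Submission
  imports Defs "HOL-Library.Sublist"
begin

lemma nca_prefix1: "prefix (nca x y) x"
  by (induction x y rule: nca.induct) auto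
lemma nca_prefix2: "prefix (nca x y) y"
  by (induction x y rule: nca.induct) auto
lemma nca_greatest: "prefix z x \<Longrightarrow> prefix z y \<Longrightarrow> prefix z (nca x y)"
proof (induction x y arbitrary: z rule: nca.induct)
  case (1 x xs y ys) then show ?case by (cases z) auto
qed (auto)
lemma nca_comm: "nca x y = nca y x"
  by (induction x y rule: nca.induct) auto
lemma nca_prefix_eq: "prefix x y \<Longrightarrow> nca x y = x"
  by (induction x y rule: nca.induct) auto
lemma nca_self: "nca x x = x" by (simp add: nca_prefix_eq)
lemma nca_append: "nca (p @ x) (p @ y) = p @ nca x y"
  by (induction p) auto
lemma nca_Nil1[simp]: "nca [] y = []" by simp
lemma nca_Nil2[simp]: "nca x [] = []" by (cases x) auto
lemma nca_ext: "\<not> prefix a b \<Longrightarrow> \<not> prefix b a \<Longrightarrow> prefix a a' \<Longrightarrow> prefix b b' \<Longrightarrow> nca a' b' = nca a b"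
proof (induction a arbitrary: b a' b')
  case Nil then show ?case by simp
next
  case (Cons x xs)
  obtain y ys where b: "b = y # ys" using Cons.prems by (cases b) auto
  obtain xs' where a': "a' = x # xs'" "prefix xs xs'" using Cons.prems(3) by (cases a') auto
  obtain ys' where b': "b' = y # ys'" "prefix ys ys'" using Cons.prems(4) b by (cases b') auto
  show ?case
  proof (cases "x = y")
    case True
    then show ?thesis using Cons.IH[of ys xs' ys'] Cons.prems a' b' b by auto
  qed (use a' b' b in auto)
qed

lemma subtree_at_append:
  "subtree_at t (p @ q) = (case subtree_at t p of None \<Rightarrow> None | Some s \<Rightarrow> subtree_at s q)"
  by (induction t p rule: subtree_at.induct) auto

lemma nodes_prefix: "q \<in> nodes t \<Longrightarrow> prefix p q \<Longrightarrow> p \<in> nodes t"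
  unfolding nodes_def by (auto simp: prefix_def subtree_at_append split: option.splits)

lemma Nil_nodes[simp]: "[] \<in> nodes t" by (simp add: nodes_def)
lemma Cons_nodes[simp]: "(j # q \<in> nodes (Node us)) \<longleftrightarrow> j < length us \<and> q \<in> nodes (us ! j)"
  by (simp add: nodes_def)

definition Emb :: "tree \<Rightarrow> tree \<Rightarrow> bool" where
"Emb A B \<longleftrightarrow> (\<exists>g. (\<forall>v\<in>nodes B. g v \<in> nodes A)
   \<and> (\<forall>u\<in>nodes B. \<forall>v\<in>nodes B. prefix u v \<longleftrightarrow> prefix (g u) (g v))
   \<and> (\<forall>u\<in>nodes B. \<forall>v\<in>nodes B. even (length (nca (g u) (g v))) = even (length (nca u v))))"

lemma Emb_refl: "Emb A A"
  unfolding Emb_def by (rule exI[of _ id]) auto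

lemma Emb_trans: "Emb A B \<Longrightarrow> Emb B C \<Longrightarrow> Emb A C"
  unfolding Emb_def
proof (elim exE conjE)
  fix g2 g1
  assume a: "\<forall>v\<in>nodes B. g2 v \<in> nodes A"
    "\<forall>u\<in>nodes B. \<forall>v\<in>nodes B. prefix u v = prefix (g2 u) (g2 v)"
    "\<forall>u\<in>nodes B. \<forall>v\<in>nodes B. even (length (nca (g2 u) (g2 v))) = even (length (nca u v))"
    and b: "\<forall>v\<in>nodes C. g1 v \<in> nodes B"
    "\<forall>u\<in>nodes C. \<forall>v\<in>nodes C. prefix u v = prefix (g1 u) (g1 v)"
    "\<forall>u\<in>nodes C. \<forall>v\<in>nodes C. even (length (nca (g1 u) (g1 v))) = even (length (nca u v))"
  show "\<exists>g. (\<forall>v\<in>nodes C. g v \<in> nodes A) \<and>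
        (\<forall>u\<in>nodes C. \<forall>v\<in>nodes C. prefix u v = prefix (g u) (g v)) \<and>
        (\<forall>u\<in>nodes C. \<forall>v\<in>nodes C. even (length (nca (g u) (g v))) = even (length (nca u v)))"
    by (rule exI[of _ "g2 \<circ> g1"]) (use a b in auto)
qed

lemma Emb_Node:
  assumes sub: "\<forall>j<length us. subtree_at (Node ts) (P j) = Some (S j) \<and> Emb (S j) (us ! j) \<and> odd (length (P j))"
    and dis: "\<forall>j<length us. \<forall>k<length us. j \<noteq> k \<longrightarrow> \<not> prefix (P j) (P k) \<and> even (length (nca (P j) (P k)))"
  shows "Emb (Node ts) (Node us)"
proof -
  have "\<forall>j. \<exists>h. j < length us \<longrightarrow> ((\<forall>v\<in>nodes (us!j). h v \<in> nodes (S j))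
   \<and> (\<forall>u\<in>nodes (us!j). \<forall>v\<in>nodes (us!j). prefix u v \<longleftrightarrow> prefix (h u) (h v))
   \<and> (\<forall>u\<in>nodes (us!j). \<forall>v\<in>nodes (us!j). even (length (nca (h u) (h v))) = even (length (nca u v))))"
    using sub unfolding Emb_def by blast
  then obtain h where h: "\<And>j. j < length us \<Longrightarrow> ((\<forall>v\<in>nodes (us!j). h j v \<in> nodes (S j))
   \<and> (\<forall>u\<in>nodes (us!j). \<forall>v\<in>nodes (us!j). prefix u v \<longleftrightarrow> prefix (h j u) (h j v))
   \<and> (\<forall>u\<in>nodes (us!j). \<forall>v\<in>nodes (us!j). even (length (nca (h j u) (h j v))) = even (length (nca u v))))"
    by metis
  define g where "g p = (case p of [] \<Rightarrow> [] | j # q \<Rightarrow> P j @ h j q)" for p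
  have g0[simp]: "g [] = []" and g1[simp]: "g (j # q) = P j @ h j q" for j q by (simp_all add: g_def)
  have Pne: "P j \<noteq> []" if "j < length us" for j
  proof -
    have "odd (length (P j))" using sub that by blast
    then show ?thesis by auto
  qed
  have ext_ne: "j < length us \<Longrightarrow> k < length us \<Longrightarrow> j \<noteq> k \<Longrightarrow> \<not> prefix (P j @ a) (P k @ b)" for j k a b
  proof
    assume jk: "j < length us" "k < length us" "j \<noteq> k" and p: "prefix (P j @ a) (P k @ b)"
    have "prefix (P j) (P j @ a)" by simp
    then have "prefix (P j) (P k @ b)" using p by (rule prefix_order.trans)
    moreover have "prefix (P k) (P k @ b)" by simp
    ultimately have "prefix (P j) (P k) \<or> prefix (P k) (P j)" using prefix_same_cases by blast
    then show False using dis jk by blast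
  qed
  show ?thesis unfolding Emb_def
  proof (intro exI[of _ g] conjI ballI)
    fix v assume "v \<in> nodes (Node us)"
    then show "g v \<in> nodes (Node ts)"
    proof (cases v)
      case (Cons j q)
      then have jq: "j < length us" "q \<in> nodes (us ! j)" using \<open>v \<in> _\<close> by auto
      then have "h j q \<in> nodes (S j)" using h by blast
      then show ?thesis using sub jq Cons by (auto simp: nodes_def subtree_at_append)
    qed simp
  next
    fix u v assume u: "u \<in> nodes (Node us)" and v: "v \<in> nodes (Node us)"
    show "prefix u v = prefix (g u) (g v)"
    proof (cases u)
      case Nil then show ?thesis by simp
    next
      case (Cons j q)
      show ?thesis
      proof (cases v)
        case Nil then show ?thesis using Cons Pne u by auto
      next
        case (Cons k r)
        show ?thesis
        proof (cases "j = k")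
          case True
          have "q \<in> nodes (us!j)" "r \<in> nodes (us!j)" "j < length us" using u v \<open>u = j # q\<close> Cons True by auto
          then have "prefix q r = prefix (h j q) (h j r)" using h by blast
          then show ?thesis using \<open>u = j # q\<close> Cons True by simp
        next
          case False
          have "j < length us" "k < length us" using u v \<open>u = j # q\<close> Cons by auto
          then show ?thesis using ext_ne[of j k] \<open>u = j # q\<close> Cons False by simp
        qed
      qed
    qed
    show "even (length (nca (g u) (g v))) = even (length (nca u v))"
    proof (cases u)
      case Nil then show ?thesis by simp
    next
      case (Cons j q)
      show ?thesis
      proof (cases v)
        case Nil then show ?thesis using Cons by auto
      next
        case (Cons k r)
        show ?thesis
        proof (cases "j = k")
          case True
          have jj: "q \<in> nodes (us!j)" "r \<in> nodes (us!j)" "j < length us" using u v \<open>u = j # q\<close> Cons True by auto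
          then have "even (length (nca (h j q) (h j r))) = even (length (nca q r))" using h by blast
          moreover have "odd (length (P j))" using sub jj by blast
          ultimately show ?thesis using \<open>u = j # q\<close> Cons True by (simp add: nca_append)
        next
          case False
          have jk: "j < length us" "k < length us" using u v \<open>u = j # q\<close> Cons by auto
          have "nca (g u) (g v) = nca (P j) (P k)"
            using \<open>u = j # q\<close> Cons jk False dis by (intro nca_ext) auto
          then show ?thesis using \<open>u = j # q\<close> Cons jk False dis by auto
        qed
      qed
    qed
  qed
qed

lemma Emb_single:
  assumes "\<forall>j<length us. s j < length ts \<and> Emb (ts ! s j) (us ! j)"
    and "\<forall>j<length us. \<forall>k<length us. j \<noteq> k \<longrightarrow> s j \<noteq> s k"
  shows "Emb (Node ts) (Node us)"
  using assms by (intro Emb_Node[where P="\<lambda>j. [s j]" and S="\<lambda>j. ts ! s j"]) auto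

lemma cut_Emb: "cut_step A B \<Longrightarrow> Emb A B"
proof (induction rule: cut_step.induct)
  case (cut_here i ts)
  let ?us = "take i ts @ drop (Suc i) ts"
  let ?s = "\<lambda>j. if j < i then j else Suc j"
  have "\<forall>j<length ?us. ?s j < length ts \<and> ?us ! j = ts ! ?s j"
    using cut_here by (auto simp: nth_append min_def)
  then show ?case by (intro Emb_single[where s="?s"]) (auto simp: Emb_refl)
next
  case (cut_deeper i ts t')
  show ?case using cut_deeper
    by (intro Emb_single[where s="id"]) (auto simp: Emb_refl nth_list_update)
qed

lemma Emb_leaf: "Emb (Node [Node []]) (Node [])"
  unfolding Emb_def by (rule exI[of _ id]) (auto simp: nodes_def elim: subtree_at.elims)

lemma contract_Emb: "contract_step A B \<Longrightarrow> Emb A B"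
proof (induction rule: contract_step.induct)
  case (contr_leaf i ts)
  show ?case using contr_leaf
    by (intro Emb_single[where s="id"]) (auto simp: Emb_refl nth_list_update Emb_leaf)
next
  case (contr_internal i ts cs)
  let ?us = "take i ts @ drop (Suc i) ts @ cs"
  let ?m = "length ts - 1"
  let ?s = "\<lambda>j. if j < i then j else Suc j"
  define P where "P j = (if j < ?m then [?s j] else [i, 0, j - ?m])" for j
  define S where "S j = (if j < ?m then ts ! ?s j else cs ! (j - ?m))" for j
  have len: "length ?us = ?m + length cs" using contr_internal by auto
  have us: "?us ! j = S j" if "j < length ?us" for j
    using contr_internal that by (auto simp: S_def nth_append min_def)
  have sub: "subtree_at (Node ts) (P j) = Some (S j)" if "j < length ?us" for j
    using contr_internal that len by (auto simp: S_def P_def)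
  show ?case
  proof (rule Emb_Node[where P=P and S=S])
    show "\<forall>j<length ?us. subtree_at (Node ts) (P j) = Some (S j) \<and> Emb (S j) (?us ! j) \<and> odd (length (P j))"
      using sub us by (auto simp: Emb_refl P_def)
    show "\<forall>j<length ?us. \<forall>k<length ?us. j \<noteq> k \<longrightarrow> \<not> prefix (P j) (P k) \<and> even (length (nca (P j) (P k)))"
      by (auto simp: P_def; linarith)
  qed
next
  case (contr_deeper i ts t')
  show ?case using contr_deeper
    by (intro Emb_single[where s="id"]) (auto simp: Emb_refl nth_list_update)
qed

lemma iso_Emb: "iso A B \<Longrightarrow> Emb A B"
proof (induction rule: iso.induct)
  case (1 ts us \<sigma>)
  let ?s = "the_inv_into {..<length ts} \<sigma>"
  have bij: "bij_betw ?s {..<length us} {..<length ts}"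
    using 1 by (simp add: bij_betw_the_inv_into)
  have inv: "\<sigma> (?s j) = j" if "j < length us" for j
    using 1 that by (simp add: f_the_inv_into_f_bij_betw)
  show ?case
  proof (rule Emb_single[where s="?s"])
    show "\<forall>j<length us. ?s j < length ts \<and> Emb (ts ! ?s j) (us ! j)"
    proof (intro allI impI conjI)
      fix j assume j: "j < length us"
      show "?s j < length ts" using bij j by (auto simp: bij_betw_def)
      then have "Emb (ts ! ?s j) (us ! \<sigma> (?s j))" using 1(3) by blast
      then show "Emb (ts ! ?s j) (us ! j)" using inv[OF j] by simp
    qed
    show "\<forall>j<length us. \<forall>k<length us. j \<noteq> k \<longrightarrow> ?s j \<noteq> ?s k"
    proof (intro allI impI)
      fix j k assume "j < length us" "k < length us" "j \<noteq> k"
      then show "?s j \<noteq> ?s k" using inv[of j] inv[of k] by force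
    qed
  qed
qed

lemma steps_Emb: "(\<lambda>x y. cut_step x y \<or> contract_step x y)\<^sup>*\<^sup>* T S \<Longrightarrow> Emb T S"
proof (induction rule: rtranclp_induct)
  case base then show ?case by (rule Emb_refl)
next
  case (step y z) then show ?case using Emb_trans cut_Emb contract_Emb by blast
qed

lemma child_nodes: "v \<in> nodes t \<Longrightarrow> (v @ [c] \<in> nodes t) \<longleftrightarrow> c < degree t v"
proof -
  assume "v \<in> nodes t"
  then obtain s where s: "subtree_at t v = Some s" by (auto simp: nodes_def)
  obtain ts where "s = Node ts" by (cases s)
  then show ?thesis using s by (auto simp: nodes_def degree_def subtree_at_append)
qed

lemma below_child: "x \<in> nodes t \<Longrightarrow> prefix v x \<Longrightarrow> x \<noteq> v \<Longrightarrow> \<exists>c. prefix (v @ [c]) x \<and> c < degree t v"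
proof -
  assume x: "x \<in> nodes t" and p: "prefix v x" and ne: "x \<noteq> v"
  obtain r where r: "x = v @ r" using p by (auto simp: prefix_def)
  then obtain c rest where "r = c # rest" using ne by (cases r) auto
  then have pc: "prefix (v @ [c]) x" using r by simp
  have "v \<in> nodes t" using x p nodes_prefix by blast
  moreover have "v @ [c] \<in> nodes t" using x pc nodes_prefix by blast
  ultimately show ?thesis using pc child_nodes by blast
qed

lemma final:
  assumes E: "Emb T T'" and bin: "binary T'" and nd: "no_deg1 T'"
  shows "\<exists>f. inj_on f (nodes T') \<and> f ` nodes T' \<subseteq> nodes T
       \<and> (\<forall>u \<in> nodes T'. \<forall>v \<in> nodes T'. f (nca u v) = nca (f u) (f v))
       \<and> (\<forall>v \<in> nodes T'. even (depth (f v)) = even (depth v))"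
proof -
  obtain g where gn: "\<And>v. v \<in> nodes T' \<Longrightarrow> g v \<in> nodes T"
    and gp: "\<And>u v. u \<in> nodes T' \<Longrightarrow> v \<in> nodes T' \<Longrightarrow> prefix u v \<longleftrightarrow> prefix (g u) (g v)"
    and gc: "\<And>u v. u \<in> nodes T' \<Longrightarrow> v \<in> nodes T' \<Longrightarrow> even (length (nca (g u) (g v))) = even (length (nca u v))"
    using E unfolding Emb_def by blast
  have deg: "v \<in> nodes T' \<Longrightarrow> degree T' v \<noteq> 0 \<Longrightarrow> degree T' v = 2" for v
    using bin nd unfolding binary_def no_deg1_def by fastforce
  have ch: "v @ [c] \<in> nodes T'" if "v \<in> nodes T'" "degree T' v \<noteq> 0" "c < 2" for v c
    using child_nodes[OF that(1)] deg[OF that(1,2)] that(3) by simp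
  define f where "f v = (if degree T' v = 0 then g v else nca (g (v @ [0])) (g (v @ [1])))" for v
  have FA: "prefix (g v) (f v)" if v: "v \<in> nodes T'" for v
  proof (cases "degree T' v = 0")
    case False
    have "prefix (g v) (g (v @ [c]))" if "c < 2" for c
      using gp[OF v ch[OF v False that]] by simp
    then show ?thesis using False by (simp add: f_def nca_greatest)
  qed (simp add: f_def)
  have FB: "prefix (f v) (g (v @ [c])) \<and> f v \<noteq> g (v @ [c])"
    if v: "v \<in> nodes T'" and d: "degree T' v \<noteq> 0" and c: "c < (2::nat)" for v c
  proof -
    have c0: "v @ [0] \<in> nodes T'" and c1: "v @ [1] \<in> nodes T'" using ch[OF v d] by auto
    have np: "\<not> prefix (g (v @ [0])) (g (v @ [1]))" "\<not> prefix (g (v @ [1])) (g (v @ [0]))"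
      using gp[OF c0 c1] gp[OF c1 c0] by auto
    have fv: "f v = nca (g (v @ [0])) (g (v @ [1]))" using d by (simp add: f_def)
    have p0: "prefix (f v) (g (v@[0]))" using fv nca_prefix1 by simp
    have p1: "prefix (f v) (g (v@[1]))" using fv nca_prefix2 by simp
    have n0: "f v \<noteq> g (v@[0])" using p1 np(1) by auto
    have n1: "f v \<noteq> g (v@[1])" using p0 np(2) by auto
    have "c = 0 \<or> c = 1" using c by auto
    then show ?thesis using p0 p1 n0 n1 by auto
  qed
  have FC: "prefix (f v) (f x) \<and> f v \<noteq> f x"
    if v: "v \<in> nodes T'" and x: "x \<in> nodes T'" and p: "prefix v x" and ne: "x \<noteq> v" for v x
  proof -
    obtain c where c: "prefix (v @ [c]) x" "c < degree T' v" using below_child[OF x p ne] by blast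
    have d: "degree T' v \<noteq> 0" using c by simp
    have c2: "c < 2" using c deg[OF v d] by simp
    have cn: "v @ [c] \<in> nodes T'" using ch[OF v d c2] .
    have 1: "prefix (f v) (g (v @ [c]))" "f v \<noteq> g (v @ [c])" using FB[OF v d c2] by auto
    have 2: "prefix (g (v @ [c])) (g x)" using gp[OF cn x] c by simp
    have 3: "prefix (g x) (f x)" using FA[OF x] .
    have 4: "prefix (g (v @ [c])) (f x)" using 2 3 by (rule prefix_order.trans)
    have "prefix (f v) (f x)" using 1(1) 4 by (rule prefix_order.trans)
    moreover have "f v \<noteq> f x"
    proof
      assume "f v = f x"
      then have "prefix (g (v @ [c])) (f v)" using 4 by simp
      then have "g (v @ [c]) = f v" using 1(1) by (rule prefix_order.antisym)
      then show False using 1(2) by simp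
    qed
    ultimately show ?thesis by simp
  qed
  have FD: "nca (f x) (f y) = f v"
    if v: "v \<in> nodes T'" and d: "degree T' v \<noteq> 0" and x: "x \<in> nodes T'" and y: "y \<in> nodes T'"
      and px: "prefix (v @ [0]) x" and py: "prefix (v @ [1]) y" for v x y
  proof -
    have c0: "v @ [0] \<in> nodes T'" and c1: "v @ [1] \<in> nodes T'" using ch[OF v d] by auto
    have np: "\<not> prefix (g (v @ [0])) (g (v @ [1]))" "\<not> prefix (g (v @ [1])) (g (v @ [0]))"
      using gp[OF c0 c1] gp[OF c1 c0] by auto
    have a: "prefix (g (v @ [0])) (f x)" using gp[OF c0 x] px FA[OF x] prefix_order.trans by blast
    have b: "prefix (g (v @ [1])) (f y)" using gp[OF c1 y] py FA[OF y] prefix_order.trans by blast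
    have "nca (f x) (f y) = nca (g (v @ [0])) (g (v @ [1]))" using nca_ext[OF np a b] .
    then show ?thesis using d by (simp add: f_def)
  qed
  have NCA: "f (nca u v) = nca (f u) (f v)" if u: "u \<in> nodes T'" and v: "v \<in> nodes T'" for u v
  proof (cases "prefix u v")
    case True
    then have "nca u v = u" by (rule nca_prefix_eq)
    moreover have "nca (f u) (f v) = f u"
      using FC[OF u v True] nca_self[of "f u"] by (cases "u = v") (auto simp: nca_prefix_eq)
    ultimately show ?thesis by simp
  next
    case npuv: False
    show ?thesis
    proof (cases "prefix v u")
      case True
      then have "nca u v = v" using nca_comm[of u v] nca_prefix_eq[OF True] by simp
      moreover have "nca (f u) (f v) = f v"
      proof -
        have "u \<noteq> v" using npuv by auto
        then have "prefix (f v) (f u)" using FC[OF v u True] by auto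
        then show ?thesis using nca_comm[of "f u" "f v"] nca_prefix_eq by simp
      qed
      ultimately show ?thesis by simp
    next
      case npvu: False
      define z where "z = nca u v"
      have zu: "prefix z u" and zv: "prefix z v" unfolding z_def by (auto simp: nca_prefix1 nca_prefix2)
      have zn: "z \<in> nodes T'" using u zu nodes_prefix by blast
      have "u \<noteq> z" using zv npuv by auto
      then obtain c where c: "prefix (z @ [c]) u" "c < degree T' z" using below_child[OF u zu] by blast
      have "v \<noteq> z" using zu npvu by auto
      then obtain d where d: "prefix (z @ [d]) v" "d < degree T' z" using below_child[OF v zv] by blast
      have dz: "degree T' z \<noteq> 0" using c by simp
      have "c \<noteq> d"
      proof
        assume "c = d"
        then have "prefix (z @ [c]) (nca u v)" using c d by (intro nca_greatest) auto
        then have "prefix (z @ [c]) z" by (simp add: z_def)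
        then show False by (auto dest: prefix_length_le)
      qed
      moreover have "c < 2" "d < 2" using c d deg[OF zn dz] by auto
      ultimately have "(c = 0 \<and> d = 1) \<or> (c = 1 \<and> d = 0)" by auto
      then show ?thesis
      proof
        assume "c = 0 \<and> d = 1"
        then show ?thesis using FD[OF zn dz u v] c d unfolding z_def by auto
      next
        assume "c = 1 \<and> d = 0"
        then have "nca (f v) (f u) = f z" using FD[OF zn dz v u] c d by auto
        then show ?thesis using nca_comm[of "f u" "f v"] z_def by simp
      qed
    qed
  qed
  show ?thesis
  proof (intro exI[of _ f] conjI ballI)
    show "inj_on f (nodes T')"
    proof (rule inj_onI)
      fix u v assume u: "u \<in> nodes T'" and v: "v \<in> nodes T'" and e: "f u = f v"
      show "u = v"
      proof (rule ccontr)
        assume ne: "u \<noteq> v"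
        show False
        proof (cases "prefix u v \<or> prefix v u")
          case True
          then show False using FC[OF u v] FC[OF v u] ne e by auto
        next
          case False
          define z where "z = nca u v"
          have zu: "prefix z u" unfolding z_def by (rule nca_prefix1)
          have zn: "z \<in> nodes T'" using u zu nodes_prefix by blast
          have "z \<noteq> u"
          proof
            assume "z = u"
            then have "prefix u v" using nca_prefix2[of u v] z_def by simp
            then show False using False by simp
          qed
          then have "f z \<noteq> f u" using FC[OF zn u zu] by auto
          moreover have "f z = f u"
          proof -
            have "f z = nca (f u) (f v)" using NCA[OF u v] z_def by simp
            then show ?thesis using e nca_self by simp
          qed
          ultimately show False by simp
        qed
      qed
    qed
  next
    fix u v assume "u \<in> nodes T'" "v \<in> nodes T'"
    then show "f (nca u v) = nca (f u) (f v)" by (rule NCA)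
  next
    fix v assume v: "v \<in> nodes T'"
    show "even (depth (f v)) = even (depth v)"
    proof (cases "degree T' v = 0")
      case True
      then show ?thesis using gc[OF v v] by (simp add: f_def depth_def nca_self)
    next
      case False
      have c0: "v @ [0] \<in> nodes T'" and c1: "v @ [1] \<in> nodes T'" using ch[OF v False] by auto
      have "nca (v @ [0]) (v @ [1]) = v" using nca_append[of v "[0]" "[1]"] by simp
      then show ?thesis using gc[OF c0 c1] False by (simp add: f_def depth_def)
    qed
  next
    show "f ` nodes T' \<subseteq> nodes T"
    proof
      fix y assume "y \<in> f ` nodes T'"
      then obtain v where v: "v \<in> nodes T'" and y: "y = f v" by blast
      show "y \<in> nodes T"
      proof (cases "degree T' v = 0")
        case True then show ?thesis using gn[OF v] y by (simp add: f_def)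
      next
        case False
        have c0: "v @ [0] \<in> nodes T'" using ch[OF v False] by auto
        have "y = nca (g (v@[0])) (g (v@[1]))" using y False by (simp add: f_def)
        then show ?thesis using nodes_prefix[OF gn[OF c0] nca_prefix1] by simp
      qed
    qed
  qed
qed

theorem lemma14:
  fixes T :: tree and n :: nat
  assumes "universal n T"
  shows "\<forall>T'. binary T' \<longrightarrow> num_leaves T' = n \<longrightarrow> no_deg1 T' \<longrightarrow>
    (\<exists>f. inj_on f (nodes T') \<and> f ` nodes T' \<subseteq> nodes T
       \<and> (\<forall>u \<in> nodes T'. \<forall>v \<in> nodes T'. f (nca u v) = nca (f u) (f v))
       \<and> (\<forall>v \<in> nodes T'. even (depth (f v)) = even (depth v)))"
proof (intro allI impI)
  fix T' assume b: "binary T'" and nl: "num_leaves T' = n" and nd: "no_deg1 T'"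
  then have "implements T T'" using assms unfolding universal_def by simp
  then obtain S where st: "(\<lambda>x y. cut_step x y \<or> contract_step x y)\<^sup>*\<^sup>* T S" and i: "iso S T'"
    unfolding implements_def by blast
  have "Emb T T'" using Emb_trans[OF steps_Emb[OF st] iso_Emb[OF i]] .
  then show "\<exists>f. inj_on f (nodes T') \<and> f ` nodes T' \<subseteq> nodes T
       \<and> (\<forall>u \<in> nodes T'. \<forall>v \<in> nodes T'. f (nca u v) = nca (f u) (f v))
       \<and> (\<forall>v \<in> nodes T'. even (depth (f v)) = even (depth v))" using final b nd by blast
qed

end
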